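(* Fix $p\geq 3$, let $\lambda=\lambda_p=2\cos(\pi/p)$ and $U=ST$ where $S=\begin{pmatrix}1&\lambda\\0&1\end{pmatrix}$, $T=\begin{pmatrix}0&-1\\1&0\end{pmatrix}$. Then $\frac{1}{U^k(0)}=U^{p-k+1}(0)$ for every integer $k$.
   Context: Matrices act on $\mathbb{R}\cup\{\infty\}$ by linear fractional transformations $z\mapsto\frac{az+b}{cz+d}$, with the conventions $1/0=\infty$ and $1/\infty=0$. *)

theory Defs
  imports Complex_Main
begin

text \<open>Points of the extended real line \<open>\<real> \<union> {\<infinity>}\<close>: \<open>Some x\<close> is the real x, \<open>None\<close> is \<infinity>.\<close>
type_synonym rext = "real option"

text \<open>2x2 real matrices (a, b, c, d) representing [[a, b], [c, d]].\<close>
type_synonym mat2 = "real \<times> real \<times> real \<times> real"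

fun mmul :: "mat2 \<Rightarrow> mat2 \<Rightarrow> mat2" where
  "mmul (a, b, c, d) (a', b', c', d') =
     (a * a' + b * c', a * b' + b * d', c * a' + d * c', c * b' + d * d')"

definition mid :: mat2 where "mid = (1, 0, 0, 1)"

fun minv :: "mat2 \<Rightarrow> mat2" where
  "minv (a, b, c, d) = (let D = a * d - b * c in (d / D, - b / D, - c / D, a / D))"

primrec mpow :: "mat2 \<Rightarrow> nat \<Rightarrow> mat2" where
  "mpow M 0 = mid"
| "mpow M (Suc n) = mmul M (mpow M n)"

definition mpowi :: "mat2 \<Rightarrow> int \<Rightarrow> mat2" where
  "mpowi M k = (if k \<ge> 0 then mpow M (nat k) else mpow (minv M) (nat (- k)))"

fun mact :: "mat2 \<Rightarrow> rext \<Rightarrow> rext" where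
  "mact (a, b, c, d) (Some x) =
     (if c * x + d = 0 then None else Some ((a * x + b) / (c * x + d)))"
| "mact (a, b, c, d) None = (if c = 0 then None else Some (a / c))"

fun rrecip :: "rext \<Rightarrow> rext" where
  "rrecip None = Some 0"
| "rrecip (Some x) = (if x = 0 then None else Some (1 / x))"

definition lam :: "nat \<Rightarrow> real" where "lam p = 2 * cos (pi / real p)"

definition Smat :: "nat \<Rightarrow> mat2" where "Smat p = (1, lam p, 0, 1)"
definition Tmat :: mat2 where "Tmat = (0, -1, 1, 0)"
definition Umat :: "nat \<Rightarrow> mat2" where "Umat p = mmul (Smat p) Tmat"

end

theory Submission
  imports Defs
begin

lemma rec_sin: "sin ((x::real) + 1 - 1) = sin x" by simp

lemma rec_sin2: "sin (((x::real) + 1) * t) + sin ((x - 1) * t) = 2 * cos t * sin (x * t)"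
proof -
  have "sin ((x + 1) * t) = sin (x*t + t)" by (simp add: algebra_simps)
  moreover have "sin ((x - 1) * t) = sin (x*t - t)" by (simp add: algebra_simps)
  ultimately show ?thesis by (simp add: sin_add sin_diff)
qed

definition sf :: "real \<Rightarrow> int \<Rightarrow> real" where
  "sf t k = sin (real_of_int k * t) / sin t"

lemma sf_rec: "sf t (k + 1) = 2 * cos t * sf t k - sf t (k - 1)"
proof -
  have "sin (real_of_int (k+1) * t) = 2 * cos t * sin (real_of_int k * t) - sin (real_of_int (k-1) * t)"
    using rec_sin2[of "real_of_int k" t] by simp
  thus ?thesis unfolding sf_def by (simp add: diff_divide_distrib)
qed

lemma sf0: "sf t 0 = 0" by (simp add: sf_def)

lemma sf1: "sin t \<noteq> 0 \<Longrightarrow> sf t 1 = 1" by (simp add: sf_def)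

lemma pow_nat:
  assumes "sin (pi / real p) \<noteq> 0"
  shows "mpow (Umat p) n = (sf (pi / real p) (int n + 1), - sf (pi / real p) (int n),
                            sf (pi / real p) (int n), - sf (pi / real p) (int n - 1))"
proof (induction n)
  case 0
  have "sf (pi / real p) (-1) = - 1" using assms by (simp add: sf_def)
  then show ?case using assms by (simp add: mid_def sf0 sf1)
next
  case (Suc n)
  let ?t = "pi / real p"
  have r: "sf ?t (int n + 2) = 2 * cos ?t * sf ?t (int n + 1) - sf ?t (int n)"
    using sf_rec[of ?t "int n + 1"] by (simp add: add.assoc)
  have r0: "sf ?t (int n + 1) = 2 * cos ?t * sf ?t (int n) - sf ?t (int n - 1)"
    using sf_rec[of ?t "int n"] by simp
  show ?case using Suc r r0
    by (simp add: Umat_def Smat_def Tmat_def lam_def algebra_simps)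
qed

lemma pow_neg:
  assumes "sin (pi / real p) \<noteq> 0"
  shows "mpow (minv (Umat p)) n = (sf (pi / real p) (1 - int n), - sf (pi / real p) (- int n),
                            sf (pi / real p) (- int n), - sf (pi / real p) (- int n - 1))"
proof (induction n)
  case 0
  have "sf (pi / real p) (-1) = - 1" using assms by (simp add: sf_def)
  then show ?case using assms by (simp add: mid_def sf0 sf1)
next
  case (Suc n)
  let ?t = "pi / real p"
  have r: "sf ?t (- int n) = 2 * cos ?t * sf ?t (- int n - 1) - sf ?t (- int n - 2)"
    using sf_rec[of ?t "- int n - 1"] by (simp add: algebra_simps)
  have r2: "sf ?t (1 - int n) = 2 * cos ?t * sf ?t (- int n) - sf ?t (- int n - 1)"
    using sf_rec[of ?t "- int n"] by (simp add: algebra_simps)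
  have r3: "sf ?t (- int n - 1) = sf ?t (- 1 - int n)" by (rule arg_cong[where f="sf ?t"]) simp
  show ?case using Suc r r2 r3
    by (simp add: Umat_def Smat_def Tmat_def lam_def algebra_simps)
qed

lemma pow_int:
  assumes "sin (pi / real p) \<noteq> 0"
  shows "mpowi (Umat p) k = (sf (pi / real p) (k + 1), - sf (pi / real p) k,
                            sf (pi / real p) k, - sf (pi / real p) (k - 1))"
  using pow_nat[OF assms, of "nat k"] pow_neg[OF assms, of "nat (-k)"]
  by (cases "k \<ge> 0") (simp_all add: mpowi_def algebra_simps)

theorem lemma4p2:
  fixes p :: nat and k :: int
  assumes "p \<ge> 3"
  shows "rrecip (mact (mpowi (Umat p) k) (Some 0))
           = mact (mpowi (Umat p) (int p - k + 1)) (Some 0)"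
proof -
  let ?t = "pi / real p"
  have pp: "real p > 0" using assms by simp
  have t0: "0 < ?t" using pp by simp
  have t1: "?t < pi" using assms by (simp add: divide_less_eq)
  have st: "sin ?t \<noteq> 0" using sin_gt_zero[OF t0 t1] by simp
  have pt: "real p * ?t = pi" using pp by simp
  have refl: "sf ?t (int p - j) = sf ?t j" for j
  proof -
    have "real_of_int (int p - j) * ?t = pi - real_of_int j * ?t"
      using pt by (simp add: algebra_simps)
    thus ?thesis unfolding sf_def by (simp add: sin_pi_minus)
  qed
  have e1: "sf ?t (int p - k + 1 - 1) = sf ?t k" using refl[of k] by simp
  have e2: "sf ?t (int p - k + 1) = sf ?t (k - 1)" using refl[of "k-1"] by (simp add: algebra_simps)
  have nz: "\<not> (sf ?t k = 0 \<and> sf ?t (k - 1) = 0)"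
  proof
    assume h: "sf ?t k = 0 \<and> sf ?t (k - 1) = 0"
    hence a: "sin (real_of_int k * ?t) = 0" and b: "sin (real_of_int (k-1) * ?t) = 0"
      using st by (auto simp: sf_def)
    have "real_of_int k * ?t - real_of_int (k-1) * ?t = ?t" by (simp add: algebra_simps diff_divide_distrib add_divide_distrib)
    hence "sin ?t = sin (real_of_int k * ?t - real_of_int (k-1) * ?t)" by simp
    also have "\<dots> = 0" using a b by (simp add: sin_diff)
    finally show False using st by simp
  qed
  show ?thesis using nz
    by (auto simp: pow_int[OF st] e1 e2 refl[of k])
qed

end
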